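(* Let $q\in[1,2]$, $L\ge 2$, $\lambda>0$, and $f\in C^1(\mathbb{R}^n,\mathbb{R})$. Let $w_{1,t},\dots,w_{L,t}\in\mathbb{R}^n$ solve the steepest flow (without weight decay) $$d w_{i,t}=-\operatorname{sign}(\nabla_{w_i}F(w_t))\odot|\nabla_{w_i}F(w_t)|^{q-1}dt,\quad i\in[L],\qquad F(w)=f\left(\textstyle\prod_{i=1}^L w_i\right),$$ with an initialization that is $\lambda$-$L_p$-balanced with respect to the first parameter, i.e. $|w_{j,0}|^q-|w_{1,0}|^q=\lambda\mathbf{1}_n$ for all $j\in\{2,\dots,L\}$. Then there is a separable function $R_{L_p,L}$, depending only on the initialization and the reparameterization, such that $x_t=\prod_{i=1}^L w_{i,t}$ satisfies, almost everywhere, the separable $L_p$ steepest mirror flow $$d\,\nabla_x R_{L_p,L}(x_t)=-\operatorname{sign}(\nabla_x f(x_t))\odot|\nabla_x f(x_t)|^{q-1}dt,\qquad x_0=\prod_{i=1}^L w_{i,0}.$$ Moreover $R_{L_p,L}$ is a separable Bregman and Legendre function when $q\frac{L-1}{L}\le 1$, and for $L=2$ its Hessian is the diagonal matrix $$\nabla^2_x R_{L_p,2}(x)=\operatorname{diag}\left(\frac{1}{\sqrt{4|x_i|^q+\lambda^2}}\right)_{i\in[n]}.$$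
   Context: All vector operations are entrywise; $\mathbf 1_n$ is the all-ones vector; $q$ is dual to $p$ ($1/p+1/q=1$). A function $R$ is separable if $R(x)=\sum_i R_i(x_i)$. Legendre function: a differentiable convex $R:\mathbb{R}^n\to\mathbb{R}\cup\{\infty\}$ that is strictly convex on the interior of its domain and such that $\|\nabla R(x_i)\|_{L_2}\to\infty$ along any sequence $x_i$ tending to the boundary of $\operatorname{dom}R$. Bregman divergence: $D_R(x_1,x_2)=R(x_1)-R(x_2)-\langle\nabla R(x_2),x_1-x_2\rangle$. Bregman function: $\operatorname{dom}R$ closed, $R$ strictly convex and continuous on $\operatorname{dom}R$ and $C^1$ on its interior; for every $x\in\operatorname{dom}R$ and $\gamma\in\mathbb{R}$ the set $\{y:D_R(x,y)\le\gamma\}$ is bounded; and $D_R(x,x_i)\to0$ whenever $x_i\to x$ with $x_i$ in the interior of the domain. *)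

theory Defs
  imports "HOL-Analysis.Analysis"
begin

text \<open>Gradient of a real-valued function on R^n (meaningful where it is differentiable).\<close>
definition grad :: "(real^'n \<Rightarrow> real) \<Rightarrow> real^'n \<Rightarrow> real^'n" where
  "grad h x = (THE v. (h has_derivative (\<lambda>y. v \<bullet> y)) (at x))"

definition prodw :: "nat \<Rightarrow> (nat \<Rightarrow> real^'n) \<Rightarrow> real^'n" where
  "prodw L ws = (\<chi> k. \<Prod>i\<in>{1..L}. ws i $ k)"

definition stp :: "real \<Rightarrow> real^'n \<Rightarrow> real^'n" where
  "stp q v = (\<chi> k. sgn (v $ k) * \<bar>v $ k\<bar> powr (q - 1))"

definition separable :: "(real^'n \<Rightarrow> real) \<Rightarrow> bool" where
  "separable R \<longleftrightarrow> (\<exists>Ri :: 'n \<Rightarrow> real \<Rightarrow> real. \<forall>x. R x = (\<Sum>k\<in>UNIV. Ri k (x $ k)))"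

text \<open>Functions R^n -> R \<union> {\<infinity>} are modelled as ereal-valued functions never equal to -\<infinity>.\<close>
definition edom :: "(real^'n \<Rightarrow> ereal) \<Rightarrow> (real^'n) set" where
  "edom R = {x. R x \<noteq> \<infinity>}"

definition bregman_div :: "(real^'n \<Rightarrow> real) \<Rightarrow> real^'n \<Rightarrow> real^'n \<Rightarrow> real" where
  "bregman_div R x1 x2 = R x1 - R x2 - grad R x2 \<bullet> (x1 - x2)"

definition legendre_fun :: "(real^'n \<Rightarrow> ereal) \<Rightarrow> bool" where
  "legendre_fun R \<longleftrightarrow>
     (let D = edom R; Rr = (\<lambda>x. real_of_ereal (R x)) in
       (\<forall>x. R x \<noteq> -\<infinity>) \<and>
       convex D \<and>
       (\<forall>x\<in>D. \<forall>y\<in>D. \<forall>u\<in>{0..1}. Rr (u *\<^sub>R x + (1 - u) *\<^sub>R y) \<le> u * Rr x + (1 - u) * Rr y) \<and>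
       (\<forall>x\<in>interior D. Rr differentiable (at x)) \<and>
       (\<forall>x\<in>interior D. \<forall>y\<in>interior D. \<forall>u\<in>{0<..<1}. x \<noteq> y \<longrightarrow>
           Rr (u *\<^sub>R x + (1 - u) *\<^sub>R y) < u * Rr x + (1 - u) * Rr y) \<and>
       (\<forall>X z. (\<forall>i. X i \<in> interior D) \<longrightarrow> X \<longlonglongrightarrow> z \<longrightarrow> z \<in> frontier D \<longrightarrow>
           filterlim (\<lambda>i. norm (grad Rr (X i))) at_top sequentially))"

definition bregman_fun :: "(real^'n \<Rightarrow> ereal) \<Rightarrow> bool" where
  "bregman_fun R \<longleftrightarrow>
     (let D = edom R; Rr = (\<lambda>x. real_of_ereal (R x)) in
       (\<forall>x. R x \<noteq> -\<infinity>) \<and>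
       closed D \<and>
       convex D \<and>
       (\<forall>x\<in>D. \<forall>y\<in>D. \<forall>u\<in>{0<..<1}. x \<noteq> y \<longrightarrow>
           Rr (u *\<^sub>R x + (1 - u) *\<^sub>R y) < u * Rr x + (1 - u) * Rr y) \<and>
       continuous_on D Rr \<and>
       (\<forall>x\<in>interior D. Rr differentiable (at x)) \<and>
       continuous_on (interior D) (grad Rr) \<and>
       (\<forall>x\<in>D. \<forall>\<gamma>. bounded {y\<in>interior D. bregman_div Rr x y \<le> \<gamma>}) \<and>
       (\<forall>x\<in>D. \<forall>X. (\<forall>i. X i \<in> interior D) \<longrightarrow> X \<longlonglongrightarrow> x \<longrightarrow>
           (\<lambda>i. bregman_div Rr x (X i)) \<longlonglongrightarrow> 0))"

end

theory Submission
  imports Defs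
begin
definition Gf :: "nat \<Rightarrow> real \<Rightarrow> real \<Rightarrow> real" where
  "Gf L lam a = a * (a + lam) ^ (L - 1)"
definition Gd :: "nat \<Rightarrow> real \<Rightarrow> real \<Rightarrow> real" where
  "Gd L lam a = (a + lam) ^ (L - 1) + real (L - 1) * a * (a + lam) ^ (L - 2)"
definition Ainv :: "nat \<Rightarrow> real \<Rightarrow> real \<Rightarrow> real" where
  "Ainv L lam y = (THE a. 0 \<le> a \<and> Gf L lam a = y)"
definition phi :: "real \<Rightarrow> nat \<Rightarrow> real \<Rightarrow> real \<Rightarrow> real" where
  "phi q L lam s = 1 / Gd L lam (Ainv L lam (\<bar>s\<bar> powr q))"
definition antider :: "(real \<Rightarrow> real) \<Rightarrow> real \<Rightarrow> real" where
  "antider g y = integral {0..y} g - integral {y..0} g"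

lemma Gf_deriv:
  assumes "L \<ge> 2"
  shows "(Gf L lam has_real_derivative Gd L lam a) (at a)"
proof -
  have e: "L - Suc (Suc 0) = L - 2" by simp
  have e2: "real (L - Suc 0) = real (L - 1)" by simp
  show ?thesis unfolding Gf_def[abs_def] Gd_def
    by (rule derivative_eq_intros refl)+ (simp only: e e2 diff_Suc_1 diff_diff_left, simp add: algebra_simps numeral_2_eq_2)
qed

lemma Gf_cont: "continuous_on S (Gf L lam)"
  unfolding Gf_def[abs_def] by (intro continuous_intros)

lemma Gd_pos:
  assumes "lam > 0" "a \<ge> 0"
  shows "Gd L lam a > 0"
proof -
  have "(a + lam) ^ (L - 1) > 0" using assms by simp
  moreover have "real (L - 1) * a * (a + lam) ^ (L - 2) \<ge> 0" using assms by simp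
  ultimately show ?thesis unfolding Gd_def by linarith
qed

lemma Gf_strict_mono:
  assumes "lam > 0" "0 \<le> a" "a < b"
  shows "Gf L lam a < Gf L lam b"
proof -
  have "(a + lam) ^ (L - 1) \<le> (b + lam) ^ (L - 1)"
    using assms by (intro power_mono) auto
  hence "a * (a + lam) ^ (L - 1) \<le> a * (b + lam) ^ (L - 1)"
    using assms by (intro mult_left_mono) auto
  also have "\<dots> < b * (b + lam) ^ (L - 1)"
    using assms by (intro mult_strict_right_mono) auto
  finally show ?thesis unfolding Gf_def .
qed

lemma Gf_mono:
  assumes "lam > 0" "0 \<le> a" "a \<le> b"
  shows "Gf L lam a \<le> Gf L lam b"
  using Gf_strict_mono[OF assms(1,2)] assms(3) by (cases "a = b") (auto simp: less_imp_le)

lemma Gf_ge: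
  assumes "lam > 0" "a \<ge> 1"
  shows "Gf L lam a \<ge> a"
proof -
  have "1 \<le> (a + lam) ^ (L - 1)" using assms by (intro one_le_power) auto
  hence "a * 1 \<le> a * (a + lam) ^ (L - 1)" using assms by (intro mult_left_mono) auto
  thus ?thesis unfolding Gf_def by simp
qed

lemma Gf_0[simp]: "Gf L lam 0 = 0" unfolding Gf_def by simp

lemma Gf_nonneg: "lam > 0 \<Longrightarrow> a \<ge> 0 \<Longrightarrow> Gf L lam a \<ge> 0"
  unfolding Gf_def by simp

lemma Ainv_ex1:
  assumes "lam > 0" "y \<ge> 0"
  shows "\<exists>!a. 0 \<le> a \<and> Gf L lam a = y"
proof -
  have "\<exists>a\<ge>0. a \<le> max 1 y \<and> Gf L lam a = y"
  proof (rule IVT')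
    show "Gf L lam 0 \<le> y" using assms by simp
    show "y \<le> Gf L lam (max 1 y)" using Gf_ge[OF assms(1), of "max 1 y" L] by simp
  qed (auto intro: Gf_cont)
  moreover have "a = b" if "0 \<le> a" "0 \<le> b" "Gf L lam a = Gf L lam b" for a b
    using Gf_strict_mono[OF assms(1), of a b L] Gf_strict_mono[OF assms(1), of b a L] that
    by (cases a b rule: linorder_cases) auto
  ultimately show ?thesis by blast
qed

lemma Ainv:
  assumes "lam > 0" "y \<ge> 0"
  shows "0 \<le> Ainv L lam y" "Gf L lam (Ainv L lam y) = y"
  using theI'[OF Ainv_ex1[OF assms, of L]] unfolding Ainv_def by auto

lemma Ainv_Gf:
  assumes "lam > 0" "a \<ge> 0"
  shows "Ainv L lam (Gf L lam a) = a"
  unfolding Ainv_def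
  by (rule the1_equality[OF Ainv_ex1]) (use assms Gf_nonneg in auto)

lemma Ainv_cont_Icc:
  assumes "lam > 0" "c \<ge> 0"
  shows "continuous_on {0..Gf L lam c} (Ainv L lam)"
proof -
  have "continuous_on (Gf L lam ` {0..c}) (Ainv L lam)"
    by (rule continuous_on_inv) (use assms Ainv_Gf Gf_cont in auto)
  moreover have "Gf L lam ` {0..c} = {0..Gf L lam c}"
  proof
    show "Gf L lam ` {0..c} \<subseteq> {0..Gf L lam c}"
      using assms Gf_nonneg Gf_mono by auto
    show "{0..Gf L lam c} \<subseteq> Gf L lam ` {0..c}"
    proof
      fix y assume y: "y \<in> {0..Gf L lam c}"
      have a0: "0 \<le> Ainv L lam y" and ay: "Gf L lam (Ainv L lam y) = y"
        using Ainv[OF assms(1), of y L] y by auto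
      have "Ainv L lam y \<le> c"
      proof (rule ccontr)
        assume "\<not> ?thesis"
        hence "Gf L lam c < Gf L lam (Ainv L lam y)" using Gf_strict_mono[OF assms(1), of c] assms by auto
        thus False using ay y by auto
      qed
      thus "y \<in> Gf L lam ` {0..c}" using a0 ay by (metis atLeastAtMost_iff image_eqI)
    qed
  qed
  ultimately show ?thesis by simp
qed

lemma Ainv_comp_cont:
  assumes "lam > 0" "q > 0"
  shows "continuous_on UNIV (\<lambda>s. Ainv L lam (\<bar>s\<bar> powr q))"
proof -
  let ?K = "range (\<lambda>n::nat. {- real n<..<real n})"
  have U: "\<Union>?K = UNIV"
  proof -
    have "x \<in> {- real (nat (ceiling \<bar>x\<bar>) + 1)<..<real (nat (ceiling \<bar>x\<bar>) + 1)}" for x :: real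
      by auto linarith+
    thus ?thesis by blast
  qed
  have "continuous_on S (\<lambda>s. Ainv L lam (\<bar>s\<bar> powr q))" if "S \<in> ?K" for S
  proof -
    obtain n :: nat where S: "S = {- real n<..<real n}" using \<open>S \<in> ?K\<close> by auto
    define c where "c = max 1 (real n powr q)"
    have c: "c \<ge> 0" unfolding c_def by simp
    have "continuous_on S (\<lambda>s. \<bar>s\<bar> powr q)"
      by (intro continuous_on_powr' continuous_intros) (use assms in auto)
    moreover have "(\<lambda>s. \<bar>s\<bar> powr q) ` S \<subseteq> {0..Gf L lam c}"
    proof clarsimp
      fix s assume "s \<in> S"
      hence "\<bar>s\<bar> \<le> real n" using S by auto
      hence "\<bar>s\<bar> powr q \<le> real n powr q" using assms by (intro powr_mono2) auto
      also have "\<dots> \<le> c" unfolding c_def by simp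
      also have "\<dots> \<le> Gf L lam c" using Gf_ge[OF assms(1), of c L] unfolding c_def by simp
      finally show "\<bar>s\<bar> powr q \<le> Gf L lam c" .
    qed
    ultimately show ?thesis
      using continuous_on_compose2[OF Ainv_cont_Icc[OF assms(1) c]] by blast
  qed
  hence "continuous_on (\<Union>?K) (\<lambda>s. Ainv L lam (\<bar>s\<bar> powr q))"
    by (intro continuous_on_open_Union) auto
  thus ?thesis using U by simp
qed

lemma phi_pos: "lam > 0 \<Longrightarrow> phi q L lam s > 0"
  unfolding phi_def using Gd_pos Ainv(1) by simp

lemma phi_cont:
  assumes "lam > 0" "q > 0"
  shows "continuous_on UNIV (phi q L lam)"
proof -
  have "continuous_on UNIV (\<lambda>s. Gd L lam (Ainv L lam (\<bar>s\<bar> powr q)))"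
    unfolding Gd_def
    by (intro continuous_intros continuous_on_compose2[OF Ainv_comp_cont[OF assms], of UNIV]) auto
  thus ?thesis unfolding phi_def[abs_def]
    by (intro continuous_intros) (use Gd_pos Ainv(1) assms in \<open>auto simp: less_imp_neq[symmetric]\<close>)
qed

lemma antider_eq:
  assumes "continuous_on UNIV g" "a \<le> 0" "a \<le> y"
  shows "antider g y = integral {a..y} g - integral {a..0} g"
proof (cases "y \<ge> 0")
  case True
  have i: "g integrable_on {a..b}" for b using assms(1) by (intro integrable_continuous_real) (auto intro: continuous_on_subset)
  have "integral {a..0} g + integral {0..y} g = integral {a..y} g"
    by (rule Henstock_Kurzweil_Integration.integral_combine) (use True assms i in auto)
  moreover have "integral {y..0} g = 0"
    using True by (cases "y = 0") auto
  ultimately show ?thesis unfolding antider_def by simp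
next
  case False
  have i: "g integrable_on {a..b}" for b using assms(1) by (intro integrable_continuous_real) (auto intro: continuous_on_subset)
  have "integral {a..y} g + integral {y..0} g = integral {a..0} g"
    by (rule Henstock_Kurzweil_Integration.integral_combine) (use False assms i in auto)
  moreover have "integral {0..y} g = 0"
    using False by simp
  ultimately show ?thesis unfolding antider_def by simp
qed

lemma antider_deriv:
  assumes "continuous_on UNIV g"
  shows "(antider g has_real_derivative g y) (at y)"
proof -
  define a where "a = min 0 y - 1"
  have "((\<lambda>u. integral {a..u} g) has_real_derivative g y) (at y within {a..y+1})"
    by (rule integral_has_real_derivative) (use assms in \<open>auto simp: a_def intro: continuous_on_subset\<close>)
  hence "((\<lambda>u. integral {a..u} g) has_real_derivative g y) (at y)"
    by (subst (asm) at_within_interior) (auto simp: a_def)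
  hence d: "((\<lambda>u. integral {a..u} g - integral {a..0} g) has_real_derivative g y) (at y)"
    by (intro derivative_eq_intros) auto
  show ?thesis
  proof (rule has_field_derivative_transform_within_open[OF d, of "{a<..}"])
    show "y \<in> {a<..}" by (auto simp: a_def)
    show "\<And>x. x \<in> {a<..} \<Longrightarrow> integral {a..x} g - integral {a..0} g = antider g x"
      by (rule antider_eq[OF assms, symmetric]) (auto simp: a_def)
  qed auto
qed

lemma inner_eq_all_imp_eq:
  fixes v w :: "'a::real_inner"
  assumes "\<And>y. v \<bullet> y = w \<bullet> y"
  shows "v = w"
proof -
  have "(v - w) \<bullet> (v - w) = 0" using assms[of "v - w"] by (simp add: inner_diff_left)
  thus ?thesis by simp
qed

lemma grad_eqI:
  assumes "(h has_derivative (\<lambda>y. v \<bullet> y)) (at x)"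
  shows "grad h x = v"
  unfolding grad_def
proof (rule the_equality)
  fix w assume "(h has_derivative (\<lambda>y. w \<bullet> y)) (at x)"
  hence "(\<lambda>y. w \<bullet> y) = (\<lambda>y. v \<bullet> y)" using has_derivative_unique assms by blast
  hence "\<And>y. w \<bullet> y = v \<bullet> y" by (rule fun_cong)
  thus "w = v" by (rule inner_eq_all_imp_eq)
qed (rule assms)

lemma grad_works:
  fixes h :: "real^'n \<Rightarrow> real"
  assumes "h differentiable (at x)"
  shows "(h has_derivative (\<lambda>y. grad h x \<bullet> y)) (at x)"
proof -
  obtain D where D: "(h has_derivative D) (at x)" using assms unfolding differentiable_def by blast
  have lin: "linear D" using D has_derivative_linear by blast
  define v where "v = (\<Sum>b\<in>Basis. D b *\<^sub>R b)"
  have "D y = v \<bullet> y" for y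
  proof -
    have "D y = D (\<Sum>b\<in>Basis. (y \<bullet> b) *\<^sub>R b)" by (simp add: euclidean_representation)
    also have "\<dots> = (\<Sum>b\<in>Basis. (y \<bullet> b) * D b)"
      using lin by (simp add: linear_sum linear_scale)
    also have "\<dots> = v \<bullet> y" unfolding v_def inner_sum_left
      by (intro sum.cong refl) (simp add: inner_commute)
    finally show ?thesis .
  qed
  hence "D = (\<lambda>y. v \<bullet> y)" by (intro ext)
  hence D': "(h has_derivative (\<lambda>y. v \<bullet> y)) (at x)"
    using D by simp
  thus ?thesis using grad_eqI[OF D'] by simp
qed

lemma vec_has_derivativeI:
  fixes f :: "'a::real_normed_vector \<Rightarrow> real^'n"
  assumes "\<And>k. ((\<lambda>x. f x $ k) has_derivative (\<lambda>h. f' h $ k)) (at a within S)"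
  shows "(f has_derivative f') (at a within S)"
proof (rule has_derivative_componentwise_within[THEN iffD2], rule ballI)
  fix i :: "real^'n" assume "i \<in> Basis"
  then obtain k u where i: "i = axis k u" "u \<in> Basis" unfolding Basis_vec_def by blast
  hence i: "i = axis k 1" by simp
  show "((\<lambda>x. f x \<bullet> i) has_derivative (\<lambda>x. f' x \<bullet> i)) (at a within S)"
    unfolding i inner_axis inner_real_def mult_1_right by (rule assms)
qed

lemma vec_has_vector_derivativeI:
  fixes f :: "real \<Rightarrow> real^'n"
  assumes "\<And>k. ((\<lambda>x. f x $ k) has_real_derivative (f' $ k)) (at a within S)"
  shows "(f has_vector_derivative f') (at a within S)"
  unfolding has_vector_derivative_def
proof (rule vec_has_derivativeI)
  fix k
  show "((\<lambda>x. f x $ k) has_derivative (\<lambda>h. (h *\<^sub>R f') $ k)) (at a within S)"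
    using assms[of k] unfolding has_field_derivative_def
    by (rule has_derivative_eq_rhs) (auto simp: fun_eq_iff)
qed

lemma vec_nth_has_real_derivative:
  fixes f :: "real \<Rightarrow> real^'n"
  assumes "(f has_vector_derivative f') F"
  shows "((\<lambda>x. f x $ k) has_real_derivative (f' $ k)) F"
proof -
  have "((\<lambda>x. f x $ k) has_derivative (\<lambda>h. (h *\<^sub>R f') $ k)) F"
    using bounded_linear.has_derivative[OF bounded_linear_vec_nth, of f "\<lambda>h. h *\<^sub>R f'" F k]
      assms unfolding has_vector_derivative_def by simp
  thus ?thesis unfolding has_field_derivative_def
    by (rule has_derivative_eq_rhs) (auto simp: fun_eq_iff)
qed

definition r1 :: "real \<Rightarrow> nat \<Rightarrow> real \<Rightarrow> real \<Rightarrow> real" where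
  "r1 q L lam = antider (phi q L lam)"
definition rr :: "real \<Rightarrow> nat \<Rightarrow> real \<Rightarrow> real \<Rightarrow> real" where
  "rr q L lam = antider (r1 q L lam)"
definition Rf :: "real \<Rightarrow> nat \<Rightarrow> real \<Rightarrow> real^'n \<Rightarrow> real" where
  "Rf q L lam x = (\<Sum>k\<in>UNIV. rr q L lam (x $ k))"

context
  fixes q lam :: real
  assumes lam: "lam > 0" and q: "q > 0"
begin

lemma r1_deriv: "(r1 q L lam has_real_derivative phi q L lam s) (at s)"
  unfolding r1_def by (rule antider_deriv[OF phi_cont[OF lam q]])

lemma r1_cont: "continuous_on S (r1 q L lam)"
  by (intro continuous_at_imp_continuous_on ballI DERIV_isCont[OF r1_deriv])

lemma rr_deriv: "(rr q L lam has_real_derivative r1 q L lam s) (at s)"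
  unfolding rr_def by (rule antider_deriv[OF r1_cont])

lemma Rf_deriv:
  "(Rf q L lam has_derivative (\<lambda>h. (\<chi> k. r1 q L lam (x $ k)) \<bullet> h)) (at (x::real^'n))"
proof -
  have "((\<lambda>x. \<Sum>k\<in>UNIV. rr q L lam (x $ k)) has_derivative
      (\<lambda>h. \<Sum>k\<in>UNIV. r1 q L lam (x $ k) * h $ k)) (at x)"
  proof (intro has_derivative_sum)
    fix k :: 'n
    have "(rr q L lam has_derivative (\<lambda>h. r1 q L lam (x $ k) * h)) (at (x $ k))"
      using rr_deriv unfolding has_field_derivative_def by blast
    from has_derivative_compose[OF bounded_linear.has_derivative[OF bounded_linear_vec_nth has_derivative_ident] this]
    show "((\<lambda>x. rr q L lam (x $ k)) has_derivative (\<lambda>h. r1 q L lam (x $ k) * h $ k)) (at x)"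
      by simp
  qed
  thus ?thesis unfolding Rf_def[abs_def] inner_vec_def by simp
qed

lemma grad_Rf: "grad (Rf q L lam) x = (\<chi> k. r1 q L lam ((x::real^'n) $ k))"
  by (rule grad_eqI[OF Rf_deriv])

lemma phi_L2: "phi q 2 lam s = 1 / sqrt (4 * \<bar>s\<bar> powr q + lam\<^sup>2)"
proof -
  define a where "a = Ainv 2 lam (\<bar>s\<bar> powr q)"
  have a0: "a \<ge> 0" and ga: "Gf 2 lam a = \<bar>s\<bar> powr q"
    using Ainv[OF lam, of "\<bar>s\<bar> powr q" 2] unfolding a_def by auto
  have "4 * \<bar>s\<bar> powr q + lam\<^sup>2 = (2 * a + lam)\<^sup>2"
    using ga unfolding Gf_def by (simp add: power2_eq_square algebra_simps)
  hence "sqrt (4 * \<bar>s\<bar> powr q + lam\<^sup>2) = 2 * a + lam" using a0 lam by simp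
  moreover have "Gd 2 lam a = 2 * a + lam" unfolding Gd_def by simp
  ultimately show ?thesis unfolding phi_def a_def[symmetric] by simp
qed

lemma hess_L2:
  "(grad (Rf q 2 lam) has_derivative
     (\<lambda>h. \<chi> k. h $ k / sqrt (4 * \<bar>x $ k\<bar> powr q + lam\<^sup>2))) (at (x::real^'n))"
proof -
  have g: "grad (Rf q 2 lam) = (\<lambda>x. \<chi> k. r1 q 2 lam ((x::real^'n) $ k))"
    by (rule ext) (rule grad_Rf)
  show ?thesis unfolding g
  proof (rule vec_has_derivativeI)
    fix k :: 'n
    have "(r1 q 2 lam has_derivative (\<lambda>h. phi q 2 lam (x $ k) * h)) (at (x $ k))"
      using r1_deriv unfolding has_field_derivative_def by blast
    from has_derivative_compose[OF bounded_linear.has_derivative[OF bounded_linear_vec_nth has_derivative_ident] this]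
    show "((\<lambda>x. (\<chi> k. r1 q 2 lam (x $ k)) $ k) has_derivative
         (\<lambda>h. (\<chi> k. h $ k / sqrt (4 * \<bar>x $ k\<bar> powr q + lam\<^sup>2)) $ k)) (at x)"
      by (simp add: phi_L2)
  qed
qed

end

context
  fixes g g1 g2 :: "real \<Rightarrow> real"
  assumes d1: "\<And>s. (g has_real_derivative g1 s) (at s)"
    and d2: "\<And>s. (g1 has_real_derivative g2 s) (at s)"
    and pos: "\<And>s. g2 s > 0"
begin

lemma g1_less: "a < b \<Longrightarrow> g1 a < g1 b"
  by (rule DERIV_pos_imp_increasing) (use d2 pos in blast)+

lemma g1_le: "a \<le> b \<Longrightarrow> g1 a \<le> g1 b"
  using g1_less by (cases "a = b") (auto simp: less_imp_le)

lemma g_mvt: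
  assumes "a < b"
  obtains z where "a < z" "z < b" "g b - g a = (b - a) * g1 z"
  using MVT2[OF assms, of g g1] d1 by blast

lemma grad_ineq: "g y \<ge> g x + g1 x * (y - x)"
proof (cases x y rule: linorder_cases)
  case less
  then obtain z where z: "x < z" "z < y" "g y - g x = (y - x) * g1 z" using g_mvt by blast
  have "g1 x * (y - x) \<le> g1 z * (y - x)" using g1_le[of x z] z less by (intro mult_right_mono) auto
  thus ?thesis using z by (simp add: algebra_simps)
next
  case greater
  then obtain z where z: "y < z" "z < x" "g x - g y = (x - y) * g1 z" using g_mvt by blast
  have "g1 z * (x - y) \<le> g1 x * (x - y)" using g1_le[of z x] z greater by (intro mult_right_mono) auto
  thus ?thesis using z by (simp add: algebra_simps)
qed simp

lemma strict_conv:
  assumes "x \<noteq> y" "0 < u" "u < 1"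
  shows "g (u * x + (1 - u) * y) < u * g x + (1 - u) * g y"
proof -
  have main: "g (u * a + (1 - u) * b) < u * g a + (1 - u) * g b" if ab: "a < b" "0 < u" "u < 1" for a b u
  proof -
    define z where "z = u * a + (1 - u) * b"
    have za: "z - a = (1 - u) * (b - a)" and bz: "b - z = u * (b - a)" unfolding z_def by (simp_all add: algebra_simps)
    have p1: "0 < (1 - u) * (b - a)" using ab by simp
    have p2: "0 < u * (b - a)" using ab by simp
    have "a < z" using p1 za by linarith
    have "z < b" using p2 bz by linarith
    obtain z1 where z1: "a < z1" "z1 < z" "g z - g a = (z - a) * g1 z1" using g_mvt[OF \<open>a < z\<close>] by blast
    obtain z2 where z2: "z < z2" "z2 < b" "g b - g z = (b - z) * g1 z2" using g_mvt[OF \<open>z < b\<close>] by blast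
    have lt: "g1 z1 < g1 z2" using z1 z2 by (intro g1_less) auto
    have "u * g a + (1 - u) * g b - g z = u * (g a - g z) + (1 - u) * (g b - g z)"
      by (simp add: algebra_simps)
    also have "\<dots> = u * (1 - u) * (b - a) * (g1 z2 - g1 z1)"
    proof -
      have e1: "g a - g z = - ((1 - u) * (b - a) * g1 z1)" using z1(3) za by simp
      have e2: "g b - g z = u * (b - a) * g1 z2" using z2(3) bz by simp
      show ?thesis unfolding e1 e2 by (simp add: algebra_simps)
    qed
    also have "\<dots> > 0" using ab lt by (intro mult_pos_pos) auto
    finally show ?thesis unfolding z_def by simp
  qed
  show ?thesis
  proof (cases "x < y")
    case True thus ?thesis using main assms by blast
  next
    case False
    hence "y < x" using assms by auto
    from main[OF this, of "1 - u"] assms show ?thesis by (simp add: algebra_simps)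
  qed
qed

lemma conv_le:
  assumes "0 \<le> u" "u \<le> 1"
  shows "g (u * x + (1 - u) * y) \<le> u * g x + (1 - u) * g y"
proof -
  consider "x = y" | "u = 0" | "u = 1" | "x \<noteq> y" "0 < u" "u < 1" using assms by force
  thus ?thesis
  proof cases
    case 1 thus ?thesis by (simp add: algebra_simps)
  next
    case 4 thus ?thesis using strict_conv less_imp_le by blast
  qed auto
qed

definition dd :: "real \<Rightarrow> real \<Rightarrow> real" where "dd a b = g a - g b - g1 b * (a - b)"

lemma dd_nonneg: "dd a b \<ge> 0"
  using grad_ineq[of b a] unfolding dd_def by simp

lemma dd_lower:
  assumes "a < z" "z < b"
  shows "dd a b \<ge> (g1 b - g1 z) * (z - a)"
proof -
  have "g z \<ge> g b + g1 b * (z - b)" by (rule grad_ineq)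
  moreover have "g a \<ge> g z + g1 z * (a - z)" by (rule grad_ineq)
  ultimately show ?thesis unfolding dd_def by (simp add: algebra_simps)
qed

lemma dd_lower':
  assumes "b < z" "z < a"
  shows "dd a b \<ge> (g1 z - g1 b) * (a - z)"
proof -
  have "g z \<ge> g b + g1 b * (z - b)" by (rule grad_ineq)
  moreover have "g a \<ge> g z + g1 z * (a - z)" by (rule grad_ineq)
  ultimately show ?thesis unfolding dd_def by (simp add: algebra_simps)
qed

lemma dd_bounded:
  assumes up: "\<And>M. \<exists>b. g1 b \<ge> M" and lo: "\<And>M. \<exists>b. g1 b \<le> M"
  shows "\<exists>B. \<forall>b. dd a b \<le> \<gamma> \<longrightarrow> \<bar>b\<bar> \<le> B"
proof -
  obtain b1 where b1: "g1 b1 \<ge> \<gamma> + 1 + g1 (a + 1)" using up by blast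
  obtain b2 where b2: "g1 b2 \<le> g1 (a - 1) - \<gamma> - 1" using lo by blast
  have "\<bar>b\<bar> \<le> \<bar>b1\<bar> + \<bar>b2\<bar> + \<bar>a\<bar> + 1" if "dd a b \<le> \<gamma>" for b
  proof -
    have "b \<le> max b1 (a + 1)"
    proof (rule ccontr)
      assume "\<not> ?thesis"
      hence bb: "b > b1" "b > a + 1" by auto
      have "dd a b \<ge> (g1 b - g1 (a + 1)) * (a + 1 - a)" by (rule dd_lower) (use bb in auto)
      moreover have "g1 b > g1 b1" using bb g1_less by blast
      ultimately show False using that b1 by simp
    qed
    moreover have "b \<ge> min b2 (a - 1)"
    proof (rule ccontr)
      assume "\<not> ?thesis"
      hence bb: "b < b2" "b < a - 1" by auto
      have "dd a b \<ge> (g1 (a - 1) - g1 b) * (a - (a - 1))" by (rule dd_lower') (use bb in auto)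
      moreover have "g1 b < g1 b2" using bb g1_less by blast
      ultimately show False using that b2 by simp
    qed
    ultimately show ?thesis by linarith
  qed
  thus ?thesis by blast
qed

end

lemma phi_lower:
  assumes lam: "lam > 0" and q: "q > 0" and L: "L \<ge> 2" and p: "q * (real L - 1) / real L \<le> 1"
  shows "\<exists>c>0. \<forall>s. phi q L lam s \<ge> c / (1 + \<bar>s\<bar>)"
proof -
  define m where "m = max 1 lam"
  define C where "C = (2 * m) ^ (L - 1) + 2 ^ (L - 1)"
  have m1: "m \<ge> 1" "m \<ge> lam" unfolding m_def by auto
  have Cpos: "C > 0" unfolding C_def using m1 by (simp add: add_pos_pos)
  have Lq: "real L - 1 \<le> real L / q"
  proof -
    have "q * (real L - 1) \<le> real L" using p L by (simp add: divide_le_eq)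
    thus ?thesis using q by (simp add: le_divide_eq mult.commute)
  qed
  have key: "Gd L lam (Ainv L lam (\<bar>s\<bar> powr q)) \<le> real L * C * (1 + \<bar>s\<bar>)" for s
  proof -
    define a where "a = Ainv L lam (\<bar>s\<bar> powr q)"
    have a0: "a \<ge> 0" and ga: "Gf L lam a = \<bar>s\<bar> powr q"
      using Ainv[OF lam, of "\<bar>s\<bar> powr q" L] unfolding a_def by auto
    have LL: "L - 1 = Suc (L - 2)" using L by simp
    have "a * (a + lam) ^ (L - 2) \<le> (a + lam) * (a + lam) ^ (L - 2)"
      using a0 lam by (intro mult_right_mono) auto
    also have "\<dots> = (a + lam) ^ (L - 1)" unfolding LL by simp
    finally have t: "a * (a + lam) ^ (L - 2) \<le> (a + lam) ^ (L - 1)" .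
    have "Gd L lam a \<le> (a + lam) ^ (L - 1) + real (L - 1) * (a + lam) ^ (L - 1)"
      unfolding Gd_def using t by (simp add: mult.assoc mult_left_mono)
    also have "\<dots> = real L * (a + lam) ^ (L - 1)" using L by (simp add: algebra_simps of_nat_diff)
    finally have g1: "Gd L lam a \<le> real L * (a + lam) ^ (L - 1)" .
    have g2: "(a + lam) ^ (L - 1) \<le> C * (1 + \<bar>s\<bar>)"
    proof (cases "a \<le> m")
      case True
      have "(a + lam) ^ (L - 1) \<le> (2 * m) ^ (L - 1)"
        using True m1 a0 lam by (intro power_mono) auto
      also have "\<dots> \<le> C" unfolding C_def by simp
      also have "\<dots> \<le> C * (1 + \<bar>s\<bar>)" using Cpos by simp
      finally show ?thesis .
    next
      case False
      hence a1: "a \<ge> 1" "a > lam" using m1 by auto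
      have "(a + lam) ^ (L - 1) \<le> (2 * a) ^ (L - 1)" using a1 lam by (intro power_mono) auto
      also have "\<dots> = 2 ^ (L - 1) * a ^ (L - 1)" by (simp add: power_mult_distrib)
      also have "a ^ (L - 1) \<le> \<bar>s\<bar>"
      proof -
        have apos: "a > 0" using a1 by simp
        have "a ^ L \<le> a * (a + lam) ^ (L - 1)"
        proof -
          have "a ^ (L - 1) \<le> (a + lam) ^ (L - 1)" using a0 lam by (intro power_mono) auto
          hence "a * a ^ (L - 1) \<le> a * (a + lam) ^ (L - 1)" using a0 by (intro mult_left_mono)
          moreover have "a * a ^ (L - 1) = a ^ L" using L by (metis LL Suc_diff_1 le_add1 numeral_2_eq_2 plus_1_eq_Suc power_Suc less_le_trans zero_less_Suc add_leE)
          ultimately show ?thesis by simp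
        qed
        hence aL: "a ^ L \<le> \<bar>s\<bar> powr q" using ga unfolding Gf_def by simp
        have "a ^ (L - 1) = a powr (real L - 1)" using apos L by (simp add: powr_realpow[symmetric] of_nat_diff)
        also have "\<dots> \<le> a powr (real L / q)" using a1 Lq by (intro powr_mono) auto
        also have "\<dots> = (a ^ L) powr (1 / q)" using apos by (simp add: powr_realpow[symmetric] powr_powr)
        also have "\<dots> \<le> (\<bar>s\<bar> powr q) powr (1 / q)" using aL q apos by (intro powr_mono2) auto
        also have "\<dots> = \<bar>s\<bar>" using q by (simp add: powr_powr)
        finally show ?thesis .
      qed
      hence "2 ^ (L - 1) * a ^ (L - 1) \<le> 2 ^ (L - 1) * \<bar>s\<bar>" by simp
      also have "\<dots> \<le> C * (1 + \<bar>s\<bar>)"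
      proof -
        have "2 ^ (L - 1) \<le> C" unfolding C_def using m1 by simp
        hence "2 ^ (L - 1) * \<bar>s\<bar> \<le> C * \<bar>s\<bar>" by (intro mult_right_mono) auto
        thus ?thesis using Cpos by (simp add: algebra_simps)
      qed
      finally show ?thesis by simp
    qed
    have "Gd L lam a \<le> real L * (C * (1 + \<bar>s\<bar>))"
      using g1 g2 L by (meson order_trans mult_left_mono of_nat_0_le_iff)
    thus ?thesis unfolding a_def by (simp add: mult.assoc)
  qed
  define c where "c = 1 / (real L * C)"
  have cpos: "c > 0" unfolding c_def using Cpos L by simp
  have "phi q L lam s \<ge> c / (1 + \<bar>s\<bar>)" for s
  proof -
    have gp: "Gd L lam (Ainv L lam (\<bar>s\<bar> powr q)) > 0" using Gd_pos[OF lam] Ainv(1)[OF lam] by simp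
    have "c / (1 + \<bar>s\<bar>) = 1 / (real L * C * (1 + \<bar>s\<bar>))" unfolding c_def by simp
    also have "\<dots> \<le> 1 / Gd L lam (Ainv L lam (\<bar>s\<bar> powr q))"
      using key[of s] gp by (intro divide_left_mono) auto
    finally show ?thesis unfolding phi_def .
  qed
  thus ?thesis using cpos by blast
qed


lemma antider_0[simp]: "antider g 0 = 0"
  unfolding antider_def by simp

context
  fixes q lam :: real
  assumes lam: "lam > 0" and q: "q > 0"
begin

lemma r1_unbounded:
  assumes L: "L \<ge> 2" and p: "q * (real L - 1) / real L \<le> 1"
  shows "\<exists>b. r1 q L lam b \<ge> M" "\<exists>b. r1 q L lam b \<le> M"
proof -
  obtain c where c: "c > 0" "\<And>s. phi q L lam s \<ge> c / (1 + \<bar>s\<bar>)"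
    using phi_lower[OF lam q L p] by blast
  have r10: "r1 q L lam 0 = 0" unfolding r1_def by simp
  have up: "r1 q L lam b \<ge> c * ln (1 + b)" if "b \<ge> 0" for b
  proof -
    have "(\<lambda>b. r1 q L lam b - c * ln (1 + b)) 0 \<le> (\<lambda>b. r1 q L lam b - c * ln (1 + b)) b"
    proof (rule DERIV_nonneg_imp_nondecreasing[OF that])
      fix x assume x: "0 \<le> x" "x \<le> b"
      have "((\<lambda>b. r1 q L lam b - c * ln (1 + b)) has_real_derivative phi q L lam x - c * (1 / (1 + x))) (at x)"
        using x by (auto intro!: derivative_eq_intros r1_deriv[OF lam q])
      moreover have "phi q L lam x - c * (1 / (1 + x)) \<ge> 0" using c(2)[of x] x by simp
      ultimately show "\<exists>y. ((\<lambda>b. r1 q L lam b - c * ln (1 + b)) has_real_derivative y) (at x) \<and> 0 \<le> y"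
        by blast
    qed
    thus ?thesis using r10 by simp
  qed
  have lo: "r1 q L lam b \<le> - c * ln (1 - b)" if "b \<le> 0" for b
  proof -
    have "(\<lambda>b. r1 q L lam b + c * ln (1 - b)) b \<le> (\<lambda>b. r1 q L lam b + c * ln (1 - b)) 0"
    proof (rule DERIV_nonneg_imp_nondecreasing[OF that])
      fix x assume x: "b \<le> x" "x \<le> 0"
      have "((\<lambda>b. r1 q L lam b + c * ln (1 - b)) has_real_derivative phi q L lam x + c * (- 1 / (1 - x))) (at x)"
        using x by (auto intro!: derivative_eq_intros r1_deriv[OF lam q])
      moreover have "phi q L lam x + c * (- 1 / (1 - x)) \<ge> 0" using c(2)[of x] x by simp
      ultimately show "\<exists>y. ((\<lambda>b. r1 q L lam b + c * ln (1 - b)) has_real_derivative y) (at x) \<and> 0 \<le> y"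
        by blast
    qed
    thus ?thesis using r10 by simp
  qed
  define b1 where "b1 = exp (\<bar>M\<bar> / c) - 1"
  have "b1 \<ge> 0" unfolding b1_def using c by simp
  hence "r1 q L lam b1 \<ge> c * ln (1 + b1)" by (rule up)
  also have "c * ln (1 + b1) = \<bar>M\<bar>" unfolding b1_def using c by simp
  finally show "\<exists>b. r1 q L lam b \<ge> M" by (intro exI[of _ b1]) linarith
  define b2 where "b2 = 1 - exp (\<bar>M\<bar> / c)"
  have "b2 \<le> 0" unfolding b2_def using c by simp
  hence "r1 q L lam b2 \<le> - c * ln (1 - b2)" by (rule lo)
  also have "- c * ln (1 - b2) = - \<bar>M\<bar>" unfolding b2_def using c by simp
  finally show "\<exists>b. r1 q L lam b \<le> M" by (intro exI[of _ b2]) linarith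
qed

lemma hess_gen:
  "(grad (Rf q L lam) has_derivative (\<lambda>h. \<chi> k. phi q L lam (x $ k) * h $ k)) (at (x::real^'n))"
proof -
  have g: "grad (Rf q L lam) = (\<lambda>x. \<chi> k. r1 q L lam ((x::real^'n) $ k))"
    by (rule ext) (rule grad_Rf[OF lam q])
  show ?thesis unfolding g
  proof (rule vec_has_derivativeI)
    fix k :: 'n
    have "(r1 q L lam has_derivative (\<lambda>h. phi q L lam (x $ k) * h)) (at (x $ k))"
      using r1_deriv[OF lam q] unfolding has_field_derivative_def by blast
    from has_derivative_compose[OF bounded_linear.has_derivative[OF bounded_linear_vec_nth has_derivative_ident] this]
    show "((\<lambda>x. (\<chi> k. r1 q L lam (x $ k)) $ k) has_derivative
         (\<lambda>h. (\<chi> k. phi q L lam (x $ k) * h $ k) $ k)) (at x)"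
      by simp
  qed
qed

lemma grad_Rf_cont: "continuous_on S (grad (Rf q L lam) :: real^'n \<Rightarrow> real^'n)"
  by (intro continuous_at_imp_continuous_on ballI has_derivative_continuous[OF hess_gen])

lemma Rf_cont: "continuous_on S (Rf q L lam :: real^'n \<Rightarrow> real)"
  by (intro continuous_at_imp_continuous_on ballI has_derivative_continuous[OF Rf_deriv[OF lam q]])

lemma Rf_strict:
  fixes x y :: "real^'n"
  assumes "x \<noteq> y" "0 < u" "u < 1"
  shows "Rf q L lam (u *\<^sub>R x + (1 - u) *\<^sub>R y) < u * Rf q L lam x + (1 - u) * Rf q L lam y"
proof -
  obtain k where k: "x $ k \<noteq> y $ k" using assms(1) by (auto simp: vec_eq_iff)
  have "Rf q L lam (u *\<^sub>R x + (1 - u) *\<^sub>R y) = (\<Sum>k\<in>UNIV. rr q L lam (u * x $ k + (1 - u) * y $ k))"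
    unfolding Rf_def by simp
  also have "\<dots> < (\<Sum>k\<in>UNIV. u * rr q L lam (x $ k) + (1 - u) * rr q L lam (y $ k))"
  proof (rule sum_strict_mono_ex1)
    show "\<forall>k\<in>UNIV. rr q L lam (u * x $ k + (1 - u) * y $ k) \<le> u * rr q L lam (x $ k) + (1 - u) * rr q L lam (y $ k)"
      using conv_le[OF rr_deriv[OF lam q] r1_deriv[OF lam q] phi_pos[OF lam]] assms by auto
    show "\<exists>k\<in>UNIV. rr q L lam (u * x $ k + (1 - u) * y $ k) < u * rr q L lam (x $ k) + (1 - u) * rr q L lam (y $ k)"
      using strict_conv[OF rr_deriv[OF lam q] r1_deriv[OF lam q] phi_pos[OF lam] k] assms by auto
  qed auto
  also have "\<dots> = u * Rf q L lam x + (1 - u) * Rf q L lam y"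
    unfolding Rf_def by (simp add: sum.distrib sum_distrib_left)
  finally show ?thesis .
qed

lemma Rf_conv:
  fixes x y :: "real^'n"
  assumes "0 \<le> u" "u \<le> 1"
  shows "Rf q L lam (u *\<^sub>R x + (1 - u) *\<^sub>R y) \<le> u * Rf q L lam x + (1 - u) * Rf q L lam y"
proof -
  have "Rf q L lam (u *\<^sub>R x + (1 - u) *\<^sub>R y) = (\<Sum>k\<in>UNIV. rr q L lam (u * x $ k + (1 - u) * y $ k))"
    unfolding Rf_def by simp
  also have "\<dots> \<le> (\<Sum>k\<in>UNIV. u * rr q L lam (x $ k) + (1 - u) * rr q L lam (y $ k))"
    by (rule sum_mono) (use conv_le[OF rr_deriv[OF lam q] r1_deriv[OF lam q] phi_pos[OF lam]] assms in auto)
  also have "\<dots> = u * Rf q L lam x + (1 - u) * Rf q L lam y"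
    unfolding Rf_def by (simp add: sum.distrib sum_distrib_left)
  finally show ?thesis .
qed

lemma bregman_div_Rf:
  "bregman_div (Rf q L lam) x y =
   (\<Sum>k\<in>UNIV. rr q L lam (x $ k) - rr q L lam (y $ k) - r1 q L lam (y $ k) * (x $ k - y $ k))"
  unfolding bregman_div_def grad_Rf[OF lam q] Rf_def inner_vec_def
  by (simp add: sum_subtractf)

lemma Rf_level_bounded:
  fixes x :: "real^'n"
  assumes L: "L \<ge> 2" and p: "q * (real L - 1) / real L \<le> 1"
  shows "bounded {y. bregman_div (Rf q L lam) x y \<le> \<gamma>}"
proof -
  let ?d = "\<lambda>a b. rr q L lam a - rr q L lam b - r1 q L lam b * (a - b)"
  have dn: "?d a b \<ge> 0" for a b
    using dd_nonneg[OF rr_deriv[OF lam q] r1_deriv[OF lam q] phi_pos[OF lam]] by (simp add: dd_def[OF rr_deriv[OF lam q] r1_deriv[OF lam q] phi_pos[OF lam]])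
  have "\<exists>B. \<forall>b. ?d (x $ k) b \<le> \<gamma> \<longrightarrow> \<bar>b\<bar> \<le> B" for k
    using dd_bounded[OF rr_deriv[OF lam q] r1_deriv[OF lam q] phi_pos[OF lam] r1_unbounded(1)[OF L p] r1_unbounded(2)[OF L p]]
    by (simp add: dd_def[OF rr_deriv[OF lam q] r1_deriv[OF lam q] phi_pos[OF lam]])
  then obtain B where B: "\<And>k b. ?d (x $ k) b \<le> \<gamma> \<Longrightarrow> \<bar>b\<bar> \<le> B k" by metis
  have "norm y \<le> (\<Sum>k\<in>UNIV. B k)" if "bregman_div (Rf q L lam) x y \<le> \<gamma>" for y
  proof -
    have "?d (x $ k) (y $ k) \<le> \<gamma>" for k
    proof -
      have "?d (x $ k) (y $ k) \<le> (\<Sum>j\<in>UNIV. ?d (x $ j) (y $ j))"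
        by (rule member_le_sum) (use dn in auto)
      thus ?thesis using that unfolding bregman_div_Rf by simp
    qed
    hence "\<bar>y $ k\<bar> \<le> B k" for k using B by blast
    hence "(\<Sum>k\<in>UNIV. \<bar>y $ k\<bar>) \<le> (\<Sum>k\<in>UNIV. B k)" by (intro sum_mono) auto
    thus ?thesis using norm_le_l1_cart[of y] by linarith
  qed
  thus ?thesis unfolding bounded_iff by blast
qed

lemma Rf_bregman_legendre:
  assumes L: "L \<ge> 2" and p: "q * (real L - 1) / real L \<le> 1"
  shows "bregman_fun (\<lambda>x::real^'n. ereal (Rf q L lam x)) \<and> legendre_fun (\<lambda>x::real^'n. ereal (Rf q L lam x))"
proof -
  have D: "edom (\<lambda>x::real^'n. ereal (Rf q L lam x)) = UNIV" unfolding edom_def by simp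
  have Rr: "(\<lambda>x::real^'n. real_of_ereal (ereal (Rf q L lam x))) = Rf q L lam" by simp
  have diff: "Rf q L lam differentiable (at x)" for x :: "real^'n"
    using Rf_deriv[OF lam q] unfolding differentiable_def by blast
  have tend: "(\<lambda>i. bregman_div (Rf q L lam) x (X i)) \<longlonglongrightarrow> 0" if "X \<longlonglongrightarrow> x" for x :: "real^'n" and X
  proof -
    have c1: "isCont (Rf q L lam) x"
      by (rule has_derivative_continuous[OF Rf_deriv[OF lam q]])
    have c2: "isCont (grad (Rf q L lam)) x"
      by (rule has_derivative_continuous[OF hess_gen])
    have "(\<lambda>i. Rf q L lam x - Rf q L lam (X i) - grad (Rf q L lam) (X i) \<bullet> (x - X i)) \<longlonglongrightarrow>
          Rf q L lam x - Rf q L lam x - grad (Rf q L lam) x \<bullet> (x - x)"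
      by (intro tendsto_intros isCont_tendsto_compose[OF c1 that] isCont_tendsto_compose[OF c2 that] that)
    thus ?thesis unfolding bregman_div_def by simp
  qed
  show ?thesis
    unfolding bregman_fun_def legendre_fun_def Let_def D Rr
    using Rf_strict Rf_conv diff grad_Rf_cont Rf_cont tend Rf_level_bounded[OF L p]
    by (auto simp: frontier_UNIV)
qed

end

lemma abs_deriv_nz:
  assumes "(y::real) \<noteq> 0"
  shows "(abs has_real_derivative sgn y) (at y)"
proof (cases "y > 0")
  case True
  have "((\<lambda>x. x) has_real_derivative sgn y) (at y)" using True by (auto intro!: derivative_eq_intros)
  thus ?thesis
    by (rule has_field_derivative_transform_within_open[of _ _ _ "{0<..}"]) (use True in auto)
next
  case False
  hence n: "y < 0" using assms by simp
  have "((\<lambda>x. - x) has_real_derivative sgn y) (at y)" using n by (auto intro!: derivative_eq_intros)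
  thus ?thesis
    by (rule has_field_derivative_transform_within_open[of _ _ _ "{..<0}"]) (use n in auto)
qed

lemma abs_powr_deriv_nz:
  assumes "(y::real) \<noteq> 0"
  shows "((\<lambda>x. \<bar>x\<bar> powr q) has_real_derivative q * \<bar>y\<bar> powr (q - 1) * sgn y) (at y)"
  using DERIV_chain2[OF has_real_derivative_powr[of "\<bar>y\<bar>" q] abs_deriv_nz[OF assms]] assms
  by simp

lemma abs_powr_deriv0:
  assumes "q > 1"
  shows "((\<lambda>x::real. \<bar>x\<bar> powr q) has_real_derivative 0) (at 0)"
  unfolding has_field_derivative_iff
proof (rule Lim_null_comparison)
  show "\<forall>\<^sub>F x in at 0. norm ((\<bar>x\<bar> powr q - \<bar>0\<bar> powr q) / (x - 0)) \<le> \<bar>x\<bar> powr (q - 1)"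
  proof (rule always_eventually, rule allI)
    fix x :: real
    show "norm ((\<bar>x\<bar> powr q - \<bar>0\<bar> powr q) / (x - 0)) \<le> \<bar>x\<bar> powr (q - 1)"
    proof (cases "x = 0")
      case False
      have "\<bar>x\<bar> powr q = \<bar>x\<bar> powr (q - 1) * \<bar>x\<bar>" using False
        by (simp add: powr_diff)
      thus ?thesis using False assms by (simp add: abs_divide)
    qed simp
  qed
  show "((\<lambda>x::real. \<bar>x\<bar> powr (q - 1)) \<longlongrightarrow> 0) (at 0)"
    by (rule tendsto_zero_powrI) (use assms in \<open>auto intro!: tendsto_eq_intros\<close>)
qed

lemma abs_deriv0:
  assumes "(u has_real_derivative 0) (at t within S)" "u t = 0"
  shows "((\<lambda>s. \<bar>u s\<bar>) has_real_derivative 0) (at t within S)"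
  using assms(1) unfolding has_field_derivative_iff
proof -
  assume a: "((\<lambda>y. (u y - u t) / (y - t)) \<longlongrightarrow> 0) (at t within S)"
  show "((\<lambda>y. (\<bar>u y\<bar> - \<bar>u t\<bar>) / (y - t)) \<longlongrightarrow> 0) (at t within S)"
  proof (rule Lim_null_comparison)
    show "\<forall>\<^sub>F x in at t within S. norm ((\<bar>u x\<bar> - \<bar>u t\<bar>) / (x - t)) \<le> norm ((u x - u t) / (x - t))"
      using assms(2) by (simp add: abs_divide)
    show "((\<lambda>x. norm ((u x - u t) / (x - t))) \<longlongrightarrow> 0) (at t within S)"
      using tendsto_norm_zero[OF a] .
  qed
qed

lemma sgn_close:
  fixes a b :: real
  assumes "\<bar>a - b\<bar> < \<bar>b\<bar>"
  shows "sgn a = sgn b"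
  using assms by (auto simp: sgn_if abs_if split: if_splits)

lemma mvt_const:
  fixes v :: "real \<Rightarrow> real"
  assumes "a < b" "continuous_on {a..b} v" "\<And>x. a < x \<Longrightarrow> x < b \<Longrightarrow> (v has_real_derivative \<sigma>) (at x)"
  shows "v b - v a = \<sigma> * (b - a)"
proof -
  obtain l z where lz: "a < z" "z < b" "(v has_real_derivative l) (at z)" "v b - v a = (b - a) * l"
    using MVT[OF assms(1,2)] assms(3) unfolding differentiable_def
    by (metis has_field_derivative_imp_has_derivative real_differentiable_def differentiable_def)
  have "l = \<sigma>" using DERIV_unique[OF lz(3) assms(3)[OF lz(1,2)]] .
  thus ?thesis using lz by simp
qed

lemma no_kink:
  fixes ui v h :: "real \<Rightarrow> real"
  assumes T: "T > 0" and t: "t \<in> {0..T}"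
    and dui: "(ui has_real_derivative D) (at t within {0..T})" and D: "D \<noteq> 0" and ui0: "ui t = 0"
    and hc: "continuous_on {0..T} h" and ht: "h t \<noteq> 0"
    and dv: "\<And>s. s \<in> {0..T} \<Longrightarrow> (v has_real_derivative - (sgn (h s * ui s) * \<bar>h s * ui s\<bar> powr 0)) (at s within {0..T})"
  shows False
proof -
  have vc: "continuous_on {0..T} v" using dv by (rule DERIV_continuous_on)
  have dvt: "(v has_real_derivative 0) (at t within {0..T})" using dv[OF t] ui0 by simp
  obtain d1 where d1: "d1 > 0" "\<And>y. y \<in> {0..T} \<Longrightarrow> \<bar>y - t\<bar> < d1 \<Longrightarrow> \<bar>ui y - ui t - D * (y - t)\<bar> \<le> \<bar>D\<bar> / 2 * \<bar>y - t\<bar>"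
  proof -
    have "(ui has_derivative (\<lambda>x. D * x)) (at t within {0..T})"
      by (rule dui[unfolded has_field_derivative_def])
    hence "\<exists>d>0. \<forall>y\<in>{0..T}. norm (y - t) < d \<longrightarrow> norm (ui y - ui t - D * (y - t)) \<le> (\<bar>D\<bar> / 2) * norm (y - t)"
    proof -
      have "\<forall>e>0. \<exists>d>0. \<forall>y\<in>{0..T}. norm (y - t) < d \<longrightarrow> norm (ui y - ui t - D * (y - t)) \<le> e * norm (y - t)"
        using \<open>(ui has_derivative (\<lambda>x. D * x)) (at t within {0..T})\<close> unfolding has_derivative_within_alt by blast
      moreover have "\<bar>D\<bar> / 2 > 0" using D by simp
      ultimately show ?thesis by blast
    qed
    thus ?thesis using that by auto
  qed
  obtain d3 where d3: "d3 > 0" "\<And>y. y \<in> {0..T} \<Longrightarrow> \<bar>y - t\<bar> < d3 \<Longrightarrow> \<bar>v y - v t\<bar> \<le> 1 / 2 * \<bar>y - t\<bar>"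
  proof -
    have "(v has_derivative (\<lambda>x. 0 * x)) (at t within {0..T})"
      by (rule dvt[unfolded has_field_derivative_def])
    hence "\<exists>d>0. \<forall>y\<in>{0..T}. norm (y - t) < d \<longrightarrow> norm (v y - v t - 0 * (y - t)) \<le> (1 / 2) * norm (y - t)"
    proof -
      have "\<forall>e>0. \<exists>d>0. \<forall>y\<in>{0..T}. norm (y - t) < d \<longrightarrow> norm (v y - v t - 0 * (y - t)) \<le> e * norm (y - t)"
        using \<open>(v has_derivative (\<lambda>x. 0 * x)) (at t within {0..T})\<close> unfolding has_derivative_within_alt by blast
      moreover have "(1::real) / 2 > 0" by simp
      ultimately show ?thesis by blast
    qed
    thus ?thesis using that by auto
  qed
  obtain d2 where d2: "d2 > 0" "\<And>y. y \<in> {0..T} \<Longrightarrow> \<bar>y - t\<bar> < d2 \<Longrightarrow> \<bar>h y - h t\<bar> < \<bar>h t\<bar>"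
  proof -
    have "\<exists>d>0. \<forall>y\<in>{0..T}. dist y t < d \<longrightarrow> dist (h y) (h t) < \<bar>h t\<bar>"
      using hc t ht unfolding continuous_on_iff by auto
    thus ?thesis using that by (auto simp: dist_real_def)
  qed
  define d where "d = min d1 (min d2 d3)"
  have d: "d > 0" "d \<le> d1" "d \<le> d2" "d \<le> d3" using d1 d2 d3 unfolding d_def by auto
  have deriv_near: "(v has_real_derivative - (sgn (h t) * sgn D * sgn (s - t))) (at s)"
    if s: "0 < s" "s < T" "0 < \<bar>s - t\<bar>" "\<bar>s - t\<bar> < d" for s
  proof -
    have sT: "s \<in> {0..T}" using s by auto
    have "sgn (h s) = sgn (h t)" using d2(2)[OF sT] s d by (intro sgn_close) auto
    moreover have "sgn (ui s) = sgn (D * (s - t))"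
    proof (rule sgn_close)
      have "\<bar>ui s - D * (s - t)\<bar> \<le> \<bar>D\<bar> / 2 * \<bar>s - t\<bar>" using d1(2)[OF sT] s d ui0 by auto
      also have "\<dots> < \<bar>D * (s - t)\<bar>" using D s by (simp add: abs_mult)
      finally show "\<bar>ui s - D * (s - t)\<bar> < \<bar>D * (s - t)\<bar>" .
    qed
    ultimately have sg: "sgn (h s * ui s) = sgn (h t) * sgn D * sgn (s - t)" by (simp add: sgn_mult)
    have nz: "h s * ui s \<noteq> 0" using sg ht D s by (auto simp: sgn_mult[symmetric] sgn_0_0)
    have dd: "(v has_real_derivative - (sgn (h t) * sgn D * sgn (s - t))) (at s within {0..T})"
      using dv[OF sT] sg nz by (simp add: powr_zero_eq_one)
    have "s \<in> interior {0..T}" using s by simp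
    hence eq: "at s within {0..T} = at s" by (rule at_within_interior)
    show ?thesis using dd unfolding eq .
  qed
  show False
  proof (cases "t < T")
    case True
    define e where "e = min d (T - t)"
    define s0 where "s0 = t + e / 2"
    have m: "e \<le> T - t" "e \<le> d" "e > 0" using True d unfolding e_def by auto
    have s01: "t < s0" using m unfolding s0_def by linarith
    have s02: "s0 \<le> T" using m unfolding s0_def by linarith
    have s03: "s0 - t < d" using m unfolding s0_def by linarith
    note s0 = s01 s02 s03
    have "v s0 - v t = (- (sgn (h t) * sgn D * 1)) * (s0 - t)"
    proof (rule mvt_const[OF s0(1)])
      show "continuous_on {t..s0} v" using vc s0 t by (auto intro: continuous_on_subset)
      fix x assume "t < x" "x < s0"
      thus "(v has_real_derivative - (sgn (h t) * sgn D * 1)) (at x)"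
        using deriv_near[of x] s0 t by auto
    qed
    hence "\<bar>v s0 - v t\<bar> = s0 - t" using ht D s0 by (simp add: abs_mult abs_sgn_eq)
    moreover have "\<bar>v s0 - v t\<bar> \<le> 1 / 2 * \<bar>s0 - t\<bar>" using d3(2)[of s0] s0 t d by auto
    ultimately show False using s0 by auto
  next
    case False
    hence tT: "t = T" using t by auto
    define e where "e = min d t"
    define s0 where "s0 = t - e / 2"
    have m: "e \<le> t" "e \<le> d" "e > 0" using T tT d unfolding e_def by auto
    have s01: "s0 < t" using m unfolding s0_def by linarith
    have s02: "0 \<le> s0" using m unfolding s0_def by linarith
    have s03: "t - s0 < d" using m unfolding s0_def by linarith
    note s0 = s01 s02 s03
    have "v t - v s0 = (- (sgn (h t) * sgn D * (-1))) * (t - s0)"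
    proof (rule mvt_const[OF s0(1)])
      show "continuous_on {s0..t} v" using vc s0 t by (auto intro: continuous_on_subset)
      fix x assume "s0 < x" "x < t"
      thus "(v has_real_derivative - (sgn (h t) * sgn D * (-1))) (at x)"
        using deriv_near[of x] s0 t tT by auto
    qed
    hence "\<bar>v t - v s0\<bar> = t - s0" using ht D s0 by (simp add: abs_mult abs_sgn_eq)
    moreover have "\<bar>v s0 - v t\<bar> \<le> 1 / 2 * \<bar>s0 - t\<bar>" using d3(2)[of s0] s0 t d by auto
    ultimately show False using s0 by (auto simp: abs_minus_commute)
  qed
qed

lemma prod_split_i:
  assumes "i \<in> {1..L::nat}"
  shows "(\<Prod>j\<in>{1..L}. u j) = (u i :: real) * (\<Prod>j\<in>{1..L} - {i}. u j)"
  using assms by (simp add: prod.remove)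

context
  fixes u :: "nat \<Rightarrow> real \<Rightarrow> real" and g :: "real \<Rightarrow> real" and q T :: real and L :: nat
  assumes q: "1 \<le> q" and L: "2 \<le> L" and T: "0 < T" and gc: "continuous_on {0..T} g"
    and du: "\<And>i t. i \<in> {1..L} \<Longrightarrow> t \<in> {0..T} \<Longrightarrow>
      (u i has_real_derivative - (sgn (g t * (\<Prod>j\<in>{1..L}-{i}. u j t)) *
          \<bar>g t * (\<Prod>j\<in>{1..L}-{i}. u j t)\<bar> powr (q - 1))) (at t within {0..T})"
begin

lemma u_cont: "i \<in> {1..L} \<Longrightarrow> continuous_on {0..T} (u i)"
  by (rule DERIV_continuous_on) (rule du)

lemma abs_powr_flow:
  assumes i: "i \<in> {1..L}" and t: "t \<in> {0..T}"
  shows "((\<lambda>s. \<bar>u i s\<bar> powr q) has_real_derivative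
     - (q * (sgn (g t * (\<Prod>j\<in>{1..L}. u j t)) * \<bar>g t * (\<Prod>j\<in>{1..L}. u j t)\<bar> powr (q - 1))))
     (at t within {0..T})"
proof -
  define P where "P = (\<Prod>j\<in>{1..L}-{i}. u j t)"
  have X: "(\<Prod>j\<in>{1..L}. u j t) = u i t * P" unfolding P_def by (rule prod_split_i[OF i])
  define D where "D = - (sgn (g t * P) * \<bar>g t * P\<bar> powr (q - 1))"
  have dui: "(u i has_real_derivative D) (at t within {0..T})" unfolding D_def P_def by (rule du[OF i t])
  show ?thesis
  proof (cases "u i t = 0")
    case False
    have "((\<lambda>s. \<bar>u i s\<bar> powr q) has_real_derivative (q * \<bar>u i t\<bar> powr (q - 1) * sgn (u i t)) * D) (at t within {0..T})"
      by (rule DERIV_chain2[OF abs_powr_deriv_nz[OF False] dui])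
    moreover have "(q * \<bar>u i t\<bar> powr (q - 1) * sgn (u i t)) * D =
       - (q * (sgn (g t * (u i t * P)) * \<bar>g t * (u i t * P)\<bar> powr (q - 1)))"
    proof -
      have "\<bar>g t * (u i t * P)\<bar> powr (q - 1) = \<bar>u i t\<bar> powr (q - 1) * \<bar>g t * P\<bar> powr (q - 1)"
        by (simp add: abs_mult powr_mult[symmetric] mult_ac)
      moreover have "sgn (g t * (u i t * P)) = sgn (u i t) * sgn (g t * P)"
        by (simp add: sgn_mult mult_ac)
      ultimately show ?thesis unfolding D_def by (simp add: mult_ac)
    qed
    ultimately show ?thesis unfolding X by simp
  next
    case True
    have tgt: "- (q * (sgn (g t * (\<Prod>j\<in>{1..L}. u j t)) * \<bar>g t * (\<Prod>j\<in>{1..L}. u j t)\<bar> powr (q - 1))) = 0"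
      unfolding X True by simp
    show ?thesis unfolding tgt
    proof (cases "q > 1")
      case True
      have "((\<lambda>s. \<bar>u i s\<bar> powr q) has_real_derivative 0 * D) (at t within {0..T})"
        by (rule DERIV_chain2[OF _ dui]) (use abs_powr_deriv0[OF True] \<open>u i t = 0\<close> in simp)
      thus "((\<lambda>s. \<bar>u i s\<bar> powr q) has_real_derivative 0) (at t within {0..T})" by simp
    next
      case False
      hence q1: "q = 1" using q by simp
      have fe: "(\<lambda>s. \<bar>u i s\<bar> powr q) = (\<lambda>s. \<bar>u i s\<bar>)" unfolding q1 by (simp add: powr_one')
      show "((\<lambda>s. \<bar>u i s\<bar> powr q) has_real_derivative 0) (at t within {0..T})"
      proof (cases "D = 0")
        case True
        thus ?thesis unfolding fe using abs_deriv0[OF dui[unfolded True] \<open>u i t = 0\<close>] by simp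
      next
        case Dnz: False
        define j where "j = (if i = 1 then 2 else 1::nat)"
        have j: "j \<in> {1..L}" "j \<noteq> i" using i L unfolding j_def by auto
        define h where "h = (\<lambda>s. g s * (\<Prod>l\<in>{1..L}-{i,j}. u l s))"
        have hc: "continuous_on {0..T} h" unfolding h_def
          by (intro continuous_intros gc) (use u_cont in auto)
        have Pj: "(\<Prod>l\<in>{1..L}-{j}. u l s) = u i s * (\<Prod>l\<in>{1..L}-{i,j}. u l s)" for s
        proof -
          have "(\<Prod>l\<in>{1..L}-{j}. u l s) = u i s * (\<Prod>l\<in>({1..L}-{j})-{i}. u l s)"
            by (rule prod.remove) (use i j in auto)
          moreover have "({1..L}-{j})-{i} = {1..L}-{i,j}" by auto
          ultimately show ?thesis by simp
        qed
        have Pi: "P = u j t * (\<Prod>l\<in>{1..L}-{i,j}. u l t)"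
        proof -
          have "P = u j t * (\<Prod>l\<in>({1..L}-{i})-{j}. u l t)"
            unfolding P_def by (rule prod.remove) (use i j in auto)
          moreover have "({1..L}-{i})-{j} = {1..L}-{i,j}" by auto
          ultimately show ?thesis by simp
        qed
        have "g t * P \<noteq> 0" using Dnz unfolding D_def by auto
        hence ht: "h t \<noteq> 0" unfolding h_def Pi by auto
        have dv: "(u j has_real_derivative - (sgn (h s * u i s) * \<bar>h s * u i s\<bar> powr 0)) (at s within {0..T})"
          if s: "s \<in> {0..T}" for s
          using du[OF j(1) s] unfolding Pj h_def q1 by (simp add: mult_ac)
        have False by (rule no_kink[OF T t dui Dnz \<open>u i t = 0\<close> hc ht dv])
        thus ?thesis ..
      qed
    qed
  qed
qed

lemma conservation:
  assumes i: "i \<in> {1..L}" and j: "j \<in> {1..L}" and t: "t \<in> {0..T}"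
  shows "\<bar>u j t\<bar> powr q - \<bar>u i t\<bar> powr q = \<bar>u j 0\<bar> powr q - \<bar>u i 0\<bar> powr q"
proof -
  let ?c = "\<lambda>s. \<bar>u j s\<bar> powr q - \<bar>u i s\<bar> powr q"
  have dc: "(?c has_real_derivative 0) (at s within {0..T})" if "s \<in> {0..T}" for s
    using DERIV_diff[OF abs_powr_flow[OF j that] abs_powr_flow[OF i that]] by simp
  show ?thesis
  proof (rule has_derivative_zero_unique_strong_interval[of "{}" 0 T ?c])
    show "continuous_on {0..T} ?c" using dc by (rule DERIV_continuous_on)
    fix s assume "s \<in> {0..T} - {}"
    hence "(?c has_derivative (*) 0) (at s within {0..T})"
      using dc[of s] unfolding has_field_derivative_def by simp
    thus "(?c has_derivative (\<lambda>h. 0)) (at s within {0..T})"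
      by (rule has_derivative_eq_rhs) auto
  qed (use t in auto)
qed

end

lemma prod_powr:
  assumes "finite A" "\<And>j. j \<in> A \<Longrightarrow> f j \<ge> (0::real)"
  shows "(\<Prod>j\<in>A. f j) powr q = (\<Prod>j\<in>A. f j powr q)"
  using assms
proof (induction A rule: finite_induct)
  case empty thus ?case by simp
next
  case (insert x F)
  thus ?case by (simp add: powr_mult prod_nonneg)
qed

lemma sgn_powr_mult:
  fixes a b q :: real
  assumes "q \<ge> 1"
  shows "sgn (a * b) * \<bar>a * b\<bar> powr (q - 1) * b = sgn a * \<bar>a\<bar> powr (q - 1) * \<bar>b\<bar> powr q"
proof (cases "a = 0 \<or> b = 0")
  case True thus ?thesis using assms by auto
next
  case False
  hence ab: "a \<noteq> 0" "b \<noteq> 0" by auto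
  have "\<bar>b\<bar> powr q = \<bar>b\<bar> powr (q - 1) * \<bar>b\<bar>" using ab by (simp add: powr_diff)
  moreover have "sgn b * b = \<bar>b\<bar>" by (simp add: sgn_mult_abs abs_sgn mult.commute)
  ultimately show ?thesis
    by (simp add: sgn_mult abs_mult powr_mult mult_ac)
qed

context
  fixes u :: "nat \<Rightarrow> real \<Rightarrow> real" and g :: "real \<Rightarrow> real" and q T lam :: real and L :: nat
  assumes q: "1 \<le> q" and L: "2 \<le> L" and T: "0 < T" and gc: "continuous_on {0..T} g" and lam: "lam > 0"
    and du: "\<And>i t. i \<in> {1..L} \<Longrightarrow> t \<in> {0..T} \<Longrightarrow>
      (u i has_real_derivative - (sgn (g t * (\<Prod>j\<in>{1..L}-{i}. u j t)) *
          \<bar>g t * (\<Prod>j\<in>{1..L}-{i}. u j t)\<bar> powr (q - 1))) (at t within {0..T})"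
    and bal: "\<And>j. j \<in> {2..L} \<Longrightarrow> \<bar>u j 0\<bar> powr q - \<bar>u 1 0\<bar> powr q = lam"
begin

lemma x_flow:
  assumes t: "t \<in> {0..T}"
  shows "((\<lambda>s. \<Prod>i\<in>{1..L}. u i s) has_real_derivative
     - (sgn (g t) * \<bar>g t\<bar> powr (q - 1)) * Gd L lam (Ainv L lam (\<bar>\<Prod>i\<in>{1..L}. u i t\<bar> powr q)))
     (at t within {0..T})"
proof -
  define P where "P i = (\<Prod>j\<in>{1..L}-{i}. u j t)" for i
  define D where "D i = - (sgn (g t * P i) * \<bar>g t * P i\<bar> powr (q - 1))" for i
  have di: "(u i has_derivative (\<lambda>y. D i * y)) (at t within {0..T})" if "i \<in> {1..L}" for i
    unfolding D_def P_def by (rule du[OF that t, unfolded has_field_derivative_def])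
  have "((\<lambda>s. \<Prod>i\<in>{1..L}. u i s) has_derivative (\<lambda>y. \<Sum>i\<in>{1..L}. D i * y * P i)) (at t within {0..T})"
    unfolding P_def by (rule has_derivative_prod[OF di])
  hence d0: "((\<lambda>s. \<Prod>i\<in>{1..L}. u i s) has_real_derivative (\<Sum>i\<in>{1..L}. D i * P i)) (at t within {0..T})"
    unfolding has_field_derivative_def
    by (rule has_derivative_eq_rhs) (auto simp: fun_eq_iff sum_distrib_left sum_distrib_right mult_ac)
  define a where "a = \<bar>u 1 t\<bar> powr q"
  have a0: "a \<ge> 0" unfolding a_def by simp
  define e where "e j = \<bar>u j t\<bar> powr q" for j
  have e1: "e 1 = a" unfolding e_def a_def by simp
  have ej: "e j = a + lam" if "j \<in> {2..L}" for j
  proof -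
    have "\<bar>u j t\<bar> powr q - \<bar>u 1 t\<bar> powr q = \<bar>u j 0\<bar> powr q - \<bar>u 1 0\<bar> powr q"
      by (rule conservation[OF q L T gc du]) (use that L t in auto)
    thus ?thesis using bal[OF that] unfolding e_def a_def by simp
  qed
  have DP: "D i * P i = - (sgn (g t) * \<bar>g t\<bar> powr (q - 1)) * (\<Prod>j\<in>{1..L}-{i}. e j)" for i
  proof -
    have "D i * P i = - (sgn (g t) * \<bar>g t\<bar> powr (q - 1) * \<bar>P i\<bar> powr q)"
      unfolding D_def using sgn_powr_mult[OF q, of "g t" "P i"] by simp
    moreover have "\<bar>P i\<bar> powr q = (\<Prod>j\<in>{1..L}-{i}. e j)"
      unfolding P_def e_def abs_prod by (rule prod_powr) auto
    ultimately show ?thesis by simp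
  qed
  have I: "{1..L} = insert 1 {2..L}" using L by auto
  have sumP: "(\<Sum>i\<in>{1..L}. \<Prod>j\<in>{1..L}-{i}. e j) = Gd L lam a"
  proof -
    have "(\<Prod>j\<in>{1..L}-{1}. e j) = (a + lam) ^ (L - 1)"
    proof -
      have "{1..L}-{1} = {2..L}" by auto
      hence "(\<Prod>j\<in>{1..L}-{1}. e j) = (\<Prod>j\<in>{2..L}. a + lam)" using ej by simp
      thus ?thesis by simp
    qed
    moreover have "(\<Prod>j\<in>{1..L}-{i}. e j) = a * (a + lam) ^ (L - 2)" if i: "i \<in> {2..L}" for i
    proof -
      have "{1..L}-{i} = insert 1 ({2..L}-{i})" using i by auto
      hence "(\<Prod>j\<in>{1..L}-{i}. e j) = e 1 * (\<Prod>j\<in>{2..L}-{i}. e j)" by simp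
      also have "(\<Prod>j\<in>{2..L}-{i}. e j) = (\<Prod>j\<in>{2..L}-{i}. a + lam)" using ej by simp
      also have "\<dots> = (a + lam) ^ (L - 2)" using i by (simp add: card_Diff_singleton numeral_2_eq_2)
      finally show ?thesis using e1 by simp
    qed
    hence "(\<Sum>i\<in>{2..L}. \<Prod>j\<in>{1..L}-{i}. e j) = (\<Sum>i\<in>{2..L}. a * (a + lam) ^ (L - 2))"
      by (intro sum.cong) auto
    ultimately have "(\<Sum>i\<in>{1..L}. \<Prod>j\<in>{1..L}-{i}. e j) = (a + lam) ^ (L - 1) + real (L - 1) * (a * (a + lam) ^ (L - 2))"
      unfolding I by (subst sum.insert) auto
    thus ?thesis unfolding Gd_def by (simp add: mult_ac)
  qed
  have xq: "\<bar>\<Prod>i\<in>{1..L}. u i t\<bar> powr q = Gf L lam a"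
  proof -
    have "\<bar>\<Prod>i\<in>{1..L}. u i t\<bar> powr q = (\<Prod>j\<in>{1..L}. e j)"
      unfolding e_def abs_prod by (rule prod_powr) auto
    also have "\<dots> = e 1 * (\<Prod>j\<in>{2..L}. e j)" unfolding I by simp
    also have "(\<Prod>j\<in>{2..L}. e j) = (\<Prod>j\<in>{2..L}. a + lam)" using ej by simp
    finally show ?thesis using e1 unfolding Gf_def by simp
  qed
  have "(\<Sum>i\<in>{1..L}. D i * P i) = - (sgn (g t) * \<bar>g t\<bar> powr (q - 1)) * Gd L lam a"
    unfolding DP sum_distrib_left[symmetric] sumP ..
  also have "Gd L lam a = Gd L lam (Ainv L lam (\<bar>\<Prod>i\<in>{1..L}. u i t\<bar> powr q))"
    unfolding xq Ainv_Gf[OF lam a0] ..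
  finally show ?thesis using d0 by simp
qed

end

lemma continuous_on_vec_nth':
  "continuous_on S F \<Longrightarrow> continuous_on S (\<lambda>s. F s $ k)"
  unfolding continuous_on_def by (auto intro: tendsto_vec_nth)

lemma prodw_nth: "prodw L ws $ k = (\<Prod>i\<in>{1..L}. ws i $ k)"
  unfolding prodw_def by simp

lemma pgrad:
  fixes f :: "real^'n \<Rightarrow> real" and ws :: "nat \<Rightarrow> real^'n"
  assumes fd: "\<And>x. f differentiable (at x)" and i: "i \<in> {1..L}"
  shows "grad (\<lambda>v. f (prodw L (ws(i := v)))) (ws i) =
    (\<chi> k. grad f (prodw L ws) $ k * (\<Prod>j\<in>{1..L}-{i}. ws j $ k))"
proof -
  define Pk where "Pk k = (\<Prod>j\<in>{1..L}-{i}. ws j $ k)" for k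
  define l where "l v = (\<chi> k. v $ k * Pk k)" for v :: "real^'n"
  have e: "prodw L (ws(i := v)) = l v" for v
  proof -
    have "(\<Prod>j\<in>{1..L}. (ws(i := v)) j $ k) = v $ k * Pk k" for k
    proof -
      have "(\<Prod>j\<in>{1..L}. (ws(i := v)) j $ k) = (ws(i := v)) i $ k * (\<Prod>j\<in>{1..L}-{i}. (ws(i := v)) j $ k)"
        by (rule prod.remove) (use i in auto)
      also have "(\<Prod>j\<in>{1..L}-{i}. (ws(i := v)) j $ k) = Pk k"
        unfolding Pk_def by (rule prod.cong) auto
      finally show ?thesis by simp
    qed
    thus ?thesis unfolding prodw_def l_def by (simp add: vec_eq_iff)
  qed
  have e0: "prodw L ws = l (ws i)" using e[of "ws i"] by simp
  have dl: "(l has_derivative l) (at v)" for v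
    unfolding l_def
  proof (rule vec_has_derivativeI)
    fix k
    have hk: "((\<lambda>v::real^'n. v $ k) has_derivative (\<lambda>h. h $ k)) (at v)"
      by (rule bounded_linear_imp_has_derivative[OF bounded_linear_vec_nth])
    show "((\<lambda>x. (\<chi> k. x $ k * Pk k) $ k) has_derivative (\<lambda>h. (\<chi> k. h $ k * Pk k) $ k)) (at v)"
      using bounded_linear.has_derivative[OF bounded_linear_mult_left hk, of "Pk k"] by simp
  qed
  have "((\<lambda>v. f (l v)) has_derivative (\<lambda>h. grad f (l (ws i)) \<bullet> l h)) (at (ws i))"
    by (rule has_derivative_compose[OF dl grad_works[OF fd]])
  moreover have "(\<lambda>h. grad f (l (ws i)) \<bullet> l h) = (\<lambda>h. (\<chi> k. grad f (prodw L ws) $ k * Pk k) \<bullet> h)"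
    unfolding e0 l_def inner_vec_def by (auto simp: fun_eq_iff mult_ac)
  ultimately have "((\<lambda>v. f (prodw L (ws(i := v)))) has_derivative
      (\<lambda>h. (\<chi> k. grad f (prodw L ws) $ k * Pk k) \<bullet> h)) (at (ws i))"
    unfolding e by simp
  thus ?thesis unfolding Pk_def by (rule grad_eqI)
qed

lemma flow_part:
  fixes q lam :: real and L :: nat and w0 :: "nat \<Rightarrow> real^'n"
    and f :: "real^'n \<Rightarrow> real" and T :: real and w :: "real \<Rightarrow> nat \<Rightarrow> real^'n"
  assumes q: "1 \<le> q" and L: "L \<ge> 2" and lam: "lam > 0"
    and balanced: "\<forall>j\<in>{2..L}. \<forall>k. \<bar>w0 j $ k\<bar> powr q - \<bar>w0 1 $ k\<bar> powr q = lam"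
    and fd: "\<forall>x. f differentiable (at x)" and gfc: "continuous_on UNIV (grad f)" and T: "T > 0"
    and win: "\<forall>i\<in>{1..L}. w 0 i = w0 i"
    and dw: "\<forall>i\<in>{1..L}. \<forall>t\<in>{0..T}.
          ((\<lambda>s. w s i) has_vector_derivative
             (- stp q (grad (\<lambda>v. f (prodw L ((w t)(i := v)))) (w t i)))) (at t within {0..T})"
  shows "AE t in lebesgue. t \<in> {0..T} \<longrightarrow>
          Rf q L lam differentiable (at (prodw L (w t))) \<and>
          ((\<lambda>s. grad (Rf q L lam) (prodw L (w s))) has_vector_derivative
             (- stp q (grad f (prodw L (w t))))) (at t)"
proof -
  have q0: "q > 0" using q by simp
  have key: "Rf q L lam differentiable (at (prodw L (w t))) \<and>
          ((\<lambda>s. grad (Rf q L lam) (prodw L (w s))) has_vector_derivative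
             (- stp q (grad f (prodw L (w t))))) (at t)" if t: "t \<in> {0<..<T}" for t
  proof
    show "Rf q L lam differentiable (at (prodw L (w t)))"
      using Rf_deriv[OF lam q0] unfolding differentiable_def by blast
    have ge: "(\<lambda>s. grad (Rf q L lam) (prodw L (w s))) = (\<lambda>s. \<chi> k. r1 q L lam (\<Prod>i\<in>{1..L}. w s i $ k))"
      by (simp add: grad_Rf[OF lam q0] prodw_nth)
    show "((\<lambda>s. grad (Rf q L lam) (prodw L (w s))) has_vector_derivative
             (- stp q (grad f (prodw L (w t))))) (at t)"
      unfolding ge
    proof (rule vec_has_vector_derivativeI)
      fix k
      define u where "u i s = w s i $ k" for i s
      define g where "g s = grad f (prodw L (w s)) $ k" for s
      have du: "(u i has_real_derivative - (sgn (g s * (\<Prod>j\<in>{1..L}-{i}. u j s)) *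
          \<bar>g s * (\<Prod>j\<in>{1..L}-{i}. u j s)\<bar> powr (q - 1))) (at s within {0..T})"
        if i: "i \<in> {1..L}" and s: "s \<in> {0..T}" for i s
      proof -
        have "((\<lambda>s. w s i $ k) has_real_derivative
            (- stp q (grad (\<lambda>v. f (prodw L ((w s)(i := v)))) (w s i))) $ k) (at s within {0..T})"
          by (rule vec_nth_has_real_derivative) (use dw i s in blast)
        thus ?thesis unfolding pgrad[OF fd[rule_format] i] u_def g_def stp_def by simp
      qed
      have wc: "continuous_on {0..T} (\<lambda>s. w s i $ k)" if "i \<in> {1..L}" for i k
      proof (rule DERIV_continuous_on)
        fix s assume s: "s \<in> {0..T}"
        show "((\<lambda>s. w s i $ k) has_real_derivative
            (- stp q (grad (\<lambda>v. f (prodw L ((w s)(i := v)))) (w s i))) $ k) (at s within {0..T})"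
          by (rule vec_nth_has_real_derivative) (use dw that s in blast)
      qed
      have gc: "continuous_on {0..T} g"
      proof -
        have "continuous_on {0..T} (\<lambda>s. prodw L (w s))"
          unfolding prodw_def
          by (intro continuous_on_vec_lambda continuous_on_prod) (use wc in auto)
        hence "continuous_on {0..T} (\<lambda>s. grad f (prodw L (w s)))"
          using continuous_on_compose2[OF gfc] by blast
        thus ?thesis unfolding g_def by (rule continuous_on_vec_nth')
      qed
      have bal: "\<bar>u j 0\<bar> powr q - \<bar>u 1 0\<bar> powr q = lam" if j: "j \<in> {2..L}" for j
      proof -
        have "w 0 j = w0 j" "w 0 1 = w0 1" using win j L by auto
        thus ?thesis using balanced j unfolding u_def by simp
      qed
      have tT: "t \<in> {0..T}" using t by auto
      have xf: "((\<lambda>s. \<Prod>i\<in>{1..L}. u i s) has_real_derivative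
         - (sgn (g t) * \<bar>g t\<bar> powr (q - 1)) * Gd L lam (Ainv L lam (\<bar>\<Prod>i\<in>{1..L}. u i t\<bar> powr q)))
         (at t within {0..T})"
        by (rule x_flow[OF q L T gc lam du bal tT])
      have "t \<in> interior {0..T}" using t by simp
      hence eq: "at t within {0..T} = at t" by (rule at_within_interior)
      have xf': "((\<lambda>s. \<Prod>i\<in>{1..L}. u i s) has_real_derivative
         - (sgn (g t) * \<bar>g t\<bar> powr (q - 1)) * Gd L lam (Ainv L lam (\<bar>\<Prod>i\<in>{1..L}. u i t\<bar> powr q)))
         (at t)" using xf unfolding eq .
      have ch: "((\<lambda>s. r1 q L lam (\<Prod>i\<in>{1..L}. u i s)) has_real_derivative
          phi q L lam (\<Prod>i\<in>{1..L}. u i t) *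
          (- (sgn (g t) * \<bar>g t\<bar> powr (q - 1)) * Gd L lam (Ainv L lam (\<bar>\<Prod>i\<in>{1..L}. u i t\<bar> powr q))))
         (at t)"
        by (rule DERIV_chain2[OF r1_deriv[OF lam q0] xf'])
      have gpos: "Gd L lam (Ainv L lam (\<bar>\<Prod>i\<in>{1..L}. u i t\<bar> powr q)) > 0"
        using Gd_pos[OF lam] Ainv(1)[OF lam] by simp
      have val: "phi q L lam (\<Prod>i\<in>{1..L}. u i t) *
          (- (sgn (g t) * \<bar>g t\<bar> powr (q - 1)) * Gd L lam (Ainv L lam (\<bar>\<Prod>i\<in>{1..L}. u i t\<bar> powr q)))
          = (- stp q (grad f (prodw L (w t)))) $ k"
        unfolding phi_def stp_def g_def using gpos by simp
      show "((\<lambda>x. (\<chi> k. r1 q L lam (\<Prod>i\<in>{1..L}. w x i $ k)) $ k) has_real_derivative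
          (- stp q (grad f (prodw L (w t)))) $ k) (at t)"
        using ch[unfolded val] unfolding u_def by simp
    qed
  qed
  show ?thesis
  proof (rule AE_I'[of "{0, T}"])
    show "{0, T} \<in> null_sets lebesgue"
      by (rule null_sets_completionI[OF countable_imp_null_set_lborel]) simp
    show "{x \<in> space lebesgue. \<not> (x \<in> {0..T} \<longrightarrow> Rf q L lam differentiable (at (prodw L (w x))) \<and>
          ((\<lambda>s. grad (Rf q L lam) (prodw L (w s))) has_vector_derivative
             (- stp q (grad f (prodw L (w x))))) (at x))} \<subseteq> {0, T}"
      using key by force
  qed
qed

theorem theorem3:
  fixes q lam :: real and L :: nat and w0 :: "nat \<Rightarrow> real^'n"
  assumes "1 \<le> q" "q \<le> 2" "L \<ge> 2" "lam > 0"
    and balanced: "\<forall>j\<in>{2..L}. \<forall>k. \<bar>w0 j $ k\<bar> powr q - \<bar>w0 1 $ k\<bar> powr q = lam"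
  shows "\<exists>R :: real^'n \<Rightarrow> real. separable R \<and>
    (\<forall>(f :: real^'n \<Rightarrow> real) (T :: real) (w :: real \<Rightarrow> nat \<Rightarrow> real^'n).
       (\<forall>x. f differentiable (at x)) \<and> continuous_on UNIV (grad f) \<and> T > 0 \<and>
       (\<forall>i\<in>{1..L}. w 0 i = w0 i) \<and>
       (\<forall>i\<in>{1..L}. \<forall>t\<in>{0..T}.
          ((\<lambda>s. w s i) has_vector_derivative
             (- stp q (grad (\<lambda>v. f (prodw L ((w t)(i := v)))) (w t i)))) (at t within {0..T}))
       \<longrightarrow>
       (AE t in lebesgue. t \<in> {0..T} \<longrightarrow>
          R differentiable (at (prodw L (w t))) \<and>
          ((\<lambda>s. grad R (prodw L (w s))) has_vector_derivative
             (- stp q (grad f (prodw L (w t))))) (at t))) \<and>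
    (q * (real L - 1) / real L \<le> 1 \<longrightarrow>
       bregman_fun (\<lambda>x. ereal (R x)) \<and> legendre_fun (\<lambda>x. ereal (R x))) \<and>
    (L = 2 \<longrightarrow> (\<forall>x. (grad R has_derivative
       (\<lambda>h. \<chi> k. h $ k / sqrt (4 * \<bar>x $ k\<bar> powr q + lam\<^sup>2))) (at x)))"
proof (intro exI[of _ "Rf q L lam"] conjI allI impI)
  have q0: "q > 0" using assms by simp
  show "separable (Rf q L lam :: real^'n \<Rightarrow> real)"
    unfolding separable_def Rf_def by (intro exI[of _ "\<lambda>k. rr q L lam"]) simp
  fix f :: "real^'n \<Rightarrow> real" and T :: real and w :: "real \<Rightarrow> nat \<Rightarrow> real^'n"
  assume H: "(\<forall>x. f differentiable (at x)) \<and> continuous_on UNIV (grad f) \<and> T > 0 \<and>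
       (\<forall>i\<in>{1..L}. w 0 i = w0 i) \<and>
       (\<forall>i\<in>{1..L}. \<forall>t\<in>{0..T}.
          ((\<lambda>s. w s i) has_vector_derivative
             (- stp q (grad (\<lambda>v. f (prodw L ((w t)(i := v)))) (w t i)))) (at t within {0..T}))"
  show "AE t in lebesgue. t \<in> {0..T} \<longrightarrow>
          Rf q L lam differentiable (at (prodw L (w t))) \<and>
          ((\<lambda>s. grad (Rf q L lam) (prodw L (w s))) has_vector_derivative
             (- stp q (grad f (prodw L (w t))))) (at t)"
    using flow_part[OF assms(1,3,4) balanced] H by blast
next
  assume p: "q * (real L - 1) / real L \<le> 1"
  have q0: "q > 0" using assms by simp
  show "bregman_fun (\<lambda>x::real^'n. ereal (Rf q L lam x))"
    using Rf_bregman_legendre[OF assms(4) q0 assms(3) p] by blast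
  show "legendre_fun (\<lambda>x::real^'n. ereal (Rf q L lam x))"
    using Rf_bregman_legendre[OF assms(4) q0 assms(3) p] by blast
next
  fix x :: "real^'n"
  assume L2: "L = 2"
  have q0: "q > 0" using assms by simp
  show "(grad (Rf q L lam) has_derivative (\<lambda>h. \<chi> k. h $ k / sqrt (4 * \<bar>x $ k\<bar> powr q + lam\<^sup>2))) (at x)"
    unfolding L2 by (rule hess_L2[OF assms(4) q0])
qed

end
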